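(* Let $K\subset\mathbb{R}^n$ be a nonempty compact set and $H$ a linear subspace of $\mathbb{R}^n$ with $1\le\dim H\le n-1$. Then the sequence $K_m:=F_H^mK$ ($F_H$ applied $m$ times) converges in the Hausdorff metric to the $H$-symmetric compact set \[L=\bigcup_{x\in H}\mathrm{conv}\big(F_HK\cap(x+H^\perp)\big).\]
   Context: For a linear subspace $H$, $H^\perp$ is its orthogonal complement, $x|H$ the orthogonal projection, and $R_Hx=2(x|H)-x$ the reflection with respect to $H$. Minkowski sum: $X+Y=\{x+y:x\in X,y\in Y\}$, $tX=\{tx\}$. The fiber symmetrization of a compact set $C$ is \[F_HC:=\bigcup_{x\in H}\Big[\tfrac12\big(C\cap(H^\perp+x)\big)+\tfrac12\big(R_HC\cap(H^\perp+x)\big)\Big].\] $\mathrm{conv}$ denotes convex hull. *)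

theory Defs
  imports "HOL-Analysis.Analysis"
begin

text \<open>Orthogonal projection of x onto a linear subspace H (written x|H in the paper):
  the unique y in H with x - y orthogonal to H.\<close>
definition proj_sub :: "'a::euclidean_space set \<Rightarrow> 'a \<Rightarrow> 'a" where
  "proj_sub H x = (THE y. y \<in> H \<and> x - y \<in> orthogonal_comp H)"

text \<open>Reflection with respect to H: R_H x = 2 (x|H) - x.\<close>
definition refl_sub :: "'a::euclidean_space set \<Rightarrow> 'a \<Rightarrow> 'a" where
  "refl_sub H x = 2 *\<^sub>R proj_sub H x - x"

text \<open>Minkowski sum and scaling, written out explicitly.\<close>
definition msum :: "'a::real_vector set \<Rightarrow> 'a set \<Rightarrow> 'a set" where
  "msum X Y = {x + y | x y. x \<in> X \<and> y \<in> Y}"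

text \<open>Fiber symmetrization F_H C.\<close>
definition fiber_sym :: "'a::euclidean_space set \<Rightarrow> 'a set \<Rightarrow> 'a set" where
  "fiber_sym H C = (\<Union>x\<in>H.
      msum ((*\<^sub>R) (1/2) ` (C \<inter> (\<lambda>y. y + x) ` orthogonal_comp H))
           ((*\<^sub>R) (1/2) ` (refl_sub H ` C \<inter> (\<lambda>y. y + x) ` orthogonal_comp H)))"

text \<open>Hausdorff distance (used between nonempty compact sets).\<close>
definition hausdorff_dist :: "'a::metric_space set \<Rightarrow> 'a set \<Rightarrow> real" where
  "hausdorff_dist A B = max (SUP a\<in>A. infdist a B) (SUP b\<in>B. infdist b A)"

end

theory Submission
  imports Defs
begin

lemma proj_unique:
  assumes H: "subspace H" and y: "y \<in> H" and z: "z \<in> orthogonal_comp H"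
  shows "proj_sub H (y + z) = y"
  unfolding proj_sub_def
proof (rule the_equality)
  show "y \<in> H \<and> y + z - y \<in> orthogonal_comp H" using y z by simp
next
  fix y' assume a: "y' \<in> H \<and> y + z - y' \<in> orthogonal_comp H"
  have d1: "y - y' \<in> H" using a y H by (simp add: subspace_diff)
  have "(y + z - y') - z \<in> orthogonal_comp H"
    using a z subspace_orthogonal_comp by (blast intro: subspace_diff)
  then have d2: "y - y' \<in> orthogonal_comp H" by (simp add: algebra_simps)
  have "(y - y') \<bullet> (y - y') = 0"
    using d1 d2 unfolding orthogonal_comp_def orthogonal_def by auto
  then show "y' = y" by simp
qed

lemma proj_decomp:
  assumes H: "subspace H"
  shows "proj_sub H c \<in> H \<and> c - proj_sub H c \<in> orthogonal_comp H"
proof -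
  obtain y z where y: "y \<in> span H" and z: "\<And>w. w \<in> span H \<Longrightarrow> orthogonal z w" and c: "c = y + z"
    using orthogonal_subspace_decomp_exists by blast
  have yH: "y \<in> H" using y H by (metis span_eq_iff)
  have zH: "z \<in> orthogonal_comp H"
    using z span_base unfolding orthogonal_comp_def by (auto simp: orthogonal_commute)
  show ?thesis using proj_unique[OF H yH zH] c yH zH by simp
qed

lemma proj_linear:
  assumes H: "subspace H"
  shows "linear (proj_sub H)"
proof (rule linearI)
  fix a b
  let ?P = "proj_sub H"
  have "a + b = (?P a + ?P b) + ((a - ?P a) + (b - ?P b))" by simp
  moreover have "?P a + ?P b \<in> H" using proj_decomp[OF H] H by (simp add: subspace_add)
  moreover have "(a - ?P a) + (b - ?P b) \<in> orthogonal_comp H"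
    using proj_decomp[OF H] by (intro subspace_add[OF subspace_orthogonal_comp]) auto
  ultimately show "?P (a + b) = ?P a + ?P b" using proj_unique[OF H] by metis
next
  fix r and a :: 'a
  let ?P = "proj_sub H"
  have "r *\<^sub>R a = r *\<^sub>R ?P a + r *\<^sub>R (a - ?P a)" by (simp add: algebra_simps)
  moreover have "r *\<^sub>R ?P a \<in> H" using proj_decomp[OF H] H by (simp add: subspace_scale)
  moreover have "r *\<^sub>R (a - ?P a) \<in> orthogonal_comp H"
    using proj_decomp[OF H] by (intro subspace_scale[OF subspace_orthogonal_comp]) auto
  ultimately show "?P (r *\<^sub>R a) = r *\<^sub>R ?P a" using proj_unique[OF H] by metis
qed

lemma proj_idem:
  assumes H: "subspace H" and "x \<in> H" shows "proj_sub H x = x"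
  using proj_unique[OF H assms(2), of 0] subspace_orthogonal_comp subspace_0 by fastforce

lemma proj_continuous: "subspace H \<Longrightarrow> continuous_on S (proj_sub H)"
  using proj_linear linear_continuous_on linear_conv_bounded_linear by blast

lemma half_half: "(1/2) *\<^sub>R x + (1/2) *\<^sub>R x = (x::'a::real_vector)"
  by (simp flip: scaleR_add_left)

lemma refl_eq: "refl_sub H q = proj_sub H q - (q - proj_sub H q)"
  unfolding refl_sub_def by (simp add: algebra_simps scaleR_2)

lemma proj_refl: assumes H: "subspace H" shows "proj_sub H (refl_sub H q) = proj_sub H q"
proof -
  have "refl_sub H q = proj_sub H q + (- (q - proj_sub H q))" by (simp add: refl_eq)
  moreover have "- (q - proj_sub H q) \<in> orthogonal_comp H"
    using proj_decomp[OF H] subspace_orthogonal_comp subspace_neg by blast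
  ultimately show ?thesis using proj_unique[OF H] proj_decomp[OF H] by metis
qed

lemma refl_refl: "refl_sub H (refl_sub H q) = q" if H: "subspace H"
  using proj_refl[OF H] by (simp add: refl_eq)

lemma mem_fiber:
  assumes H: "subspace H" and x: "x \<in> H"
  shows "c \<in> (\<lambda>y. y + x) ` orthogonal_comp H \<longleftrightarrow> proj_sub H c = x"
proof
  assume "c \<in> (\<lambda>y. y + x) ` orthogonal_comp H"
  then obtain y where y: "y \<in> orthogonal_comp H" "c = x + y" by (auto simp: add.commute)
  then show "proj_sub H c = x" using proj_unique[OF H x] by simp
next
  assume "proj_sub H c = x"
  then have "c = (c - proj_sub H c) + x" "c - proj_sub H c \<in> orthogonal_comp H"
    using proj_decomp[OF H] by auto
  then show "c \<in> (\<lambda>y. y + x) ` orthogonal_comp H" by blast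
qed

lemma fiber_sym_char:
  assumes H: "subspace H"
  shows "fiber_sym H C = {proj_sub H a + (1/2) *\<^sub>R (a - q) | a q. a \<in> C \<and> q \<in> C \<and> proj_sub H a = proj_sub H q}"
    (is "_ = ?R")
proof
  show "fiber_sym H C \<subseteq> ?R"
  proof
    fix z assume "z \<in> fiber_sym H C"
    then obtain x u v where x: "x \<in> H" and z: "z = u + v"
      and u: "u \<in> (*\<^sub>R) (1/2) ` (C \<inter> (\<lambda>y. y + x) ` orthogonal_comp H)"
      and v: "v \<in> (*\<^sub>R) (1/2) ` (refl_sub H ` C \<inter> (\<lambda>y. y + x) ` orthogonal_comp H)"
      unfolding fiber_sym_def msum_def by blast
    obtain a where a: "a \<in> C" "proj_sub H a = x" "u = (1/2) *\<^sub>R a"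
      using u mem_fiber[OF H x] by blast
    obtain q where q: "q \<in> C" "proj_sub H (refl_sub H q) = x" "v = (1/2) *\<^sub>R refl_sub H q"
      using v mem_fiber[OF H x] by blast
    have q2: "proj_sub H q = x" using q proj_refl[OF H] by simp
    have "z = proj_sub H a + (1/2) *\<^sub>R (a - q)"
      using z a q q2 by (simp add: refl_eq algebra_simps scaleR_2 half_half)
    then show "z \<in> ?R" using a q q2 by fastforce
  qed
next
  show "?R \<subseteq> fiber_sym H C"
  proof
    fix z assume "z \<in> ?R"
    then obtain a q where aq: "a \<in> C" "q \<in> C" "proj_sub H a = proj_sub H q"
      and z: "z = proj_sub H a + (1/2) *\<^sub>R (a - q)" by blast
    define x where "x = proj_sub H a"
    have x: "x \<in> H" using proj_decomp[OF H] x_def by blast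
    have "a \<in> C \<inter> (\<lambda>y. y + x) ` orthogonal_comp H" using aq mem_fiber[OF H x] x_def by blast
    moreover have "refl_sub H q \<in> refl_sub H ` C \<inter> (\<lambda>y. y + x) ` orthogonal_comp H"
      using aq mem_fiber[OF H x] x_def proj_refl[OF H] by auto
    moreover have "z = (1/2) *\<^sub>R a + (1/2) *\<^sub>R refl_sub H q"
      using z aq x_def by (simp add: refl_eq algebra_simps scaleR_2 half_half)
    ultimately show "z \<in> fiber_sym H C" unfolding fiber_sym_def msum_def using x by blast
  qed
qed


lemma proj_diff_orth:
  assumes H: "subspace H" and e: "proj_sub H a = proj_sub H q"
  shows "r *\<^sub>R (a - q) \<in> orthogonal_comp H"
proof -
  have "a - q = (a - proj_sub H a) - (q - proj_sub H q)" using e by simp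
  then have "a - q \<in> orthogonal_comp H"
    using proj_decomp[OF H] by (metis subspace_diff subspace_orthogonal_comp)
  then show ?thesis by (simp add: subspace_scale subspace_orthogonal_comp)
qed

lemma fs_proj:
  assumes H: "subspace H" and e: "proj_sub H a = proj_sub H q"
  shows "proj_sub H (proj_sub H a + (1/2) *\<^sub>R (a - q)) = proj_sub H a"
  using proj_unique[OF H _ proj_diff_orth[OF H e]] proj_decomp[OF H] by blast

lemma fs_mem:
  assumes H: "subspace H"
  shows "c \<in> fiber_sym H C \<longleftrightarrow> (\<exists>a q. a \<in> C \<and> q \<in> C \<and> proj_sub H a = proj_sub H q \<and> c = proj_sub H a + (1/2) *\<^sub>R (a - q))"
  unfolding fiber_sym_char[OF H] by blast

lemma fs_nonempty: "subspace H \<Longrightarrow> C \<noteq> {} \<Longrightarrow> fiber_sym H C \<noteq> {}"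
  using fs_mem by blast

lemma fs_compact:
  assumes H: "subspace H" and C: "compact C"
  shows "compact (fiber_sym H C)"
proof -
  let ?P = "proj_sub H"
  let ?S = "(C \<times> C) \<inter> {p. ?P (fst p) - ?P (snd p) = 0}"
  have cP: "continuous_on UNIV ?P" using proj_continuous[OF H] .
  have "closed {p. ?P (fst p) - ?P (snd p) = 0}"
    by (intro closed_Collect_eq continuous_intros continuous_on_compose2[OF cP]) auto
  then have "compact ?S" using C by (intro compact_Int_closed compact_Times) auto
  moreover have "continuous_on ?S (\<lambda>p. ?P (fst p) + (1/2) *\<^sub>R (fst p - snd p))"
    by (intro continuous_intros continuous_on_compose2[OF cP]) auto
  ultimately have "compact ((\<lambda>p. ?P (fst p) + (1/2) *\<^sub>R (fst p - snd p)) ` ?S)"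
    using compact_continuous_image by blast
  moreover have "(\<lambda>p. ?P (fst p) + (1/2) *\<^sub>R (fst p - snd p)) ` ?S = fiber_sym H C"
    unfolding fiber_sym_char[OF H] by force
  ultimately show ?thesis by simp
qed

lemma fs_proj_mem:
  assumes H: "subspace H" and c: "c \<in> fiber_sym H C"
  shows "proj_sub H c \<in> fiber_sym H C \<and> proj_sub H c = proj_sub H c"
proof -
  obtain a q where aq: "a \<in> C" "q \<in> C" "proj_sub H a = proj_sub H q" "c = proj_sub H a + (1/2) *\<^sub>R (a - q)"
    using c fs_mem[OF H] by blast
  have "proj_sub H c = proj_sub H a" using fs_proj[OF H aq(3)] aq(4) by simp
  moreover have "proj_sub H a + (1/2) *\<^sub>R (a - a) \<in> fiber_sym H C" using aq fs_mem[OF H] by blast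
  ultimately show ?thesis by simp
qed

lemma fs_refl:
  assumes H: "subspace H" and c: "c \<in> fiber_sym H C"
  shows "refl_sub H c \<in> fiber_sym H C"
proof -
  obtain a q where aq: "a \<in> C" "q \<in> C" "proj_sub H a = proj_sub H q" "c = proj_sub H a + (1/2) *\<^sub>R (a - q)"
    using c fs_mem[OF H] by blast
  have pc: "proj_sub H c = proj_sub H a" using fs_proj[OF H aq(3)] aq(4) by simp
  have "refl_sub H c = 2 *\<^sub>R proj_sub H a - c" using pc by (simp add: refl_sub_def)
  also have "\<dots> = proj_sub H a + (1/2) *\<^sub>R (q - a)"
    by (simp add: aq(4) algebra_simps scaleR_2)
  finally have "refl_sub H c = proj_sub H q + (1/2) *\<^sub>R (q - a)" using aq(3) by simp
  then show ?thesis using aq fs_mem[OF H] by (metis)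
qed

lemma refl_linear: assumes H: "subspace H" shows "linear (refl_sub H)"
  unfolding refl_sub_def using proj_linear[OF H]
  by (intro linearI) (auto simp: linear_add linear_scale algebra_simps)


lemma iter_compact:
  assumes H: "subspace H" and K: "compact K" "K \<noteq> {}"
  shows "compact ((fiber_sym H ^^ m) K) \<and> (fiber_sym H ^^ m) K \<noteq> {}"
  by (induction m) (auto simp: K fs_compact[OF H] fs_nonempty[OF H])

lemma iter_refl:
  assumes H: "subspace H" and c: "c \<in> (fiber_sym H ^^ m) (fiber_sym H K)"
  shows "refl_sub H c \<in> (fiber_sym H ^^ m) (fiber_sym H K)"
proof -
  have "(fiber_sym H ^^ m) (fiber_sym H K) = fiber_sym H ((fiber_sym H ^^ m) K)"
    by (simp add: funpow_swap1)
  then show ?thesis using c fs_refl[OF H] by simp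
qed

lemma avg_mem:
  assumes H: "subspace H"
  shows "length xs = 2^m \<Longrightarrow> set xs \<subseteq> fiber_sym H K \<inter> {c. proj_sub H c = x} \<Longrightarrow>
    (1/2^m) *\<^sub>R sum_list xs \<in> (fiber_sym H ^^ m) (fiber_sym H K) \<and>
    proj_sub H ((1/2^m) *\<^sub>R sum_list xs) = x"
proof (induction m arbitrary: xs)
  case 0
  then obtain c where "xs = [c]" by (auto simp: length_Suc_conv)
  then show ?case using 0 by auto
next
  case (Suc m)
  define ys where "ys = take (2^m) xs"
  define zs where "zs = drop (2^m) xs"
  have xs: "xs = ys @ zs" by (simp add: ys_def zs_def)
  have ly: "length ys = 2^m" "length zs = 2^m" using Suc.prems(1) by (auto simp: ys_def zs_def)
  have sy: "set ys \<subseteq> fiber_sym H K \<inter> {c. proj_sub H c = x}" "set zs \<subseteq> fiber_sym H K \<inter> {c. proj_sub H c = x}"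
    using Suc.prems(2) xs by auto
  define Y where "Y = (1/2^m) *\<^sub>R sum_list ys"
  define Z where "Z = (1/2^m) *\<^sub>R sum_list zs"
  have IY: "Y \<in> (fiber_sym H ^^ m) (fiber_sym H K)" "proj_sub H Y = x"
    using Suc.IH[OF ly(1) sy(1)] Y_def by auto
  have IZ: "Z \<in> (fiber_sym H ^^ m) (fiber_sym H K)" "proj_sub H Z = x"
    using Suc.IH[OF ly(2) sy(2)] Z_def by auto
  have avg: "(1/2^Suc m) *\<^sub>R sum_list xs = (1/2) *\<^sub>R (Y + Z)"
    by (simp add: xs Y_def Z_def scaleR_add_right)
  have rZ: "refl_sub H Z \<in> (fiber_sym H ^^ m) (fiber_sym H K)" "proj_sub H (refl_sub H Z) = x"
    using iter_refl[OF H IZ(1)] proj_refl[OF H] IZ(2) by auto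
  have "(1/2) *\<^sub>R (Y + Z) = proj_sub H Y + (1/2) *\<^sub>R (Y - refl_sub H Z)"
    using IY(2) IZ(2) by (simp add: refl_sub_def algebra_simps scaleR_2 half_half)
  then have "(1/2) *\<^sub>R (Y + Z) \<in> fiber_sym H ((fiber_sym H ^^ m) (fiber_sym H K))"
    using fs_mem[OF H] IY rZ by (metis)
  moreover have "proj_sub H ((1/2) *\<^sub>R (Y + Z)) = x"
    using proj_linear[OF H] IY(2) IZ(2) by (simp add: linear_add linear_scale half_half)
  ultimately show ?case using avg by simp
qed


lemma refl_fiber:
  assumes H: "subspace H"
  shows "refl_sub H ` (fiber_sym H K \<inter> {c. proj_sub H c = x}) = fiber_sym H K \<inter> {c. proj_sub H c = x}"
proof
  show "refl_sub H ` (fiber_sym H K \<inter> {c. proj_sub H c = x}) \<subseteq> fiber_sym H K \<inter> {c. proj_sub H c = x}"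
    using fs_refl[OF H] proj_refl[OF H] by auto
  show "fiber_sym H K \<inter> {c. proj_sub H c = x} \<subseteq> refl_sub H ` (fiber_sym H K \<inter> {c. proj_sub H c = x})"
  proof
    fix c assume c: "c \<in> fiber_sym H K \<inter> {c. proj_sub H c = x}"
    then have "refl_sub H c \<in> fiber_sym H K \<inter> {c. proj_sub H c = x}"
      using fs_refl[OF H] proj_refl[OF H] by auto
    moreover have "c = refl_sub H (refl_sub H c)" using refl_refl[OF H] by simp
    ultimately show "c \<in> refl_sub H ` (fiber_sym H K \<inter> {c. proj_sub H c = x})" by blast
  qed
qed

lemma refl_hull:
  assumes H: "subspace H"
  shows "refl_sub H ` (convex hull (fiber_sym H K \<inter> {c. proj_sub H c = x})) = convex hull (fiber_sym H K \<inter> {c. proj_sub H c = x})"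
  using convex_hull_linear_image[OF refl_linear[OF H]] refl_fiber[OF H] by metis

lemma iter_in_hull:
  assumes H: "subspace H"
  shows "c \<in> (fiber_sym H ^^ m) (fiber_sym H K) \<Longrightarrow> c \<in> convex hull (fiber_sym H K \<inter> {d. proj_sub H d = proj_sub H c})"
proof (induction m arbitrary: c)
  case 0
  then show ?case by (simp add: hull_inc)
next
  case (Suc m)
  then obtain a q where aq: "a \<in> (fiber_sym H ^^ m) (fiber_sym H K)" "q \<in> (fiber_sym H ^^ m) (fiber_sym H K)"
    "proj_sub H a = proj_sub H q" "c = proj_sub H a + (1/2) *\<^sub>R (a - q)"
    using fs_mem[OF H] by auto
  have pc: "proj_sub H c = proj_sub H a" using fs_proj[OF H aq(3)] aq(4) by simp
  let ?C = "convex hull (fiber_sym H K \<inter> {d. proj_sub H d = proj_sub H a})"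
  have a: "a \<in> ?C" using Suc.IH[OF aq(1)] .
  have "q \<in> ?C" using Suc.IH[OF aq(2)] aq(3) by simp
  then have q: "refl_sub H q \<in> ?C" using refl_hull[OF H, of K "proj_sub H a"] by blast
  have "c = (1/2) *\<^sub>R a + (1/2) *\<^sub>R refl_sub H q"
    using aq(3,4) by (simp add: refl_sub_def algebra_simps scaleR_2 half_half)
  then have "c \<in> ?C" using convexD[OF convex_convex_hull a q, of "1/2" "1/2"] by simp
  then show ?case using pc by simp
qed


primrec Qs :: "'a::euclidean_space set \<Rightarrow> 'a set \<Rightarrow> nat \<Rightarrow> 'a set" where
  "Qs H A 0 = A"
| "Qs H A (Suc n) = (\<lambda>p. (1 - snd (snd p)) *\<^sub>R fst p + snd (snd p) *\<^sub>R fst (snd p)) `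
     ((Qs H A n \<times> A \<times> {0..1}) \<inter> {p. proj_sub H (fst p) - proj_sub H (fst (snd p)) = 0})"

lemma Qs_compact:
  assumes H: "subspace H" and A: "compact A"
  shows "compact (Qs H A n)"
proof (induction n)
  case 0 then show ?case using A by simp
next
  case (Suc n)
  let ?P = "proj_sub H"
  let ?S = "(Qs H A n \<times> A \<times> {0..1::real}) \<inter> {p. ?P (fst p) - ?P (fst (snd p)) = 0}"
  have cP: "continuous_on UNIV ?P" using proj_continuous[OF H] .
  have "closed {p::'a \<times> 'a \<times> real. ?P (fst p) - ?P (fst (snd p)) = 0}"
    by (intro closed_Collect_eq continuous_intros continuous_on_compose2[OF cP]) auto
  then have "compact ?S" using A Suc.IH by (intro compact_Int_closed compact_Times) auto
  moreover have "continuous_on ?S (\<lambda>p. (1 - snd (snd p)) *\<^sub>R fst p + snd (snd p) *\<^sub>R fst (snd p))"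
    by (intro continuous_intros)
  ultimately show ?case using compact_continuous_image by (simp only: Qs.simps) blast
qed

lemma Qs_sup: "A \<subseteq> Qs H A n"
proof (induction n)
  case 0 then show ?case by simp
next
  case (Suc n)
  show ?case
  proof
    fix y assume y: "y \<in> A"
    let ?p = "(y, y, 0::real)"
    have "?p \<in> (Qs H A n \<times> A \<times> {0..1}) \<inter> {p. proj_sub H (fst p) - proj_sub H (fst (snd p)) = 0}"
      using y Suc.IH by auto
    then show "y \<in> Qs H A (Suc n)" by (simp only: Qs.simps) force
  qed
qed

lemma fib_convex: assumes H: "subspace H" shows "convex {c. proj_sub H c = x}"
  unfolding convex_def using proj_linear[OF H]
  by (auto simp: linear_add linear_scale simp flip: scaleR_add_left)

lemma Qs_hull:
  assumes H: "subspace H"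
  shows "y \<in> Qs H A n \<Longrightarrow> y \<in> convex hull (A \<inter> {c. proj_sub H c = proj_sub H y})"
proof (induction n arbitrary: y)
  case 0 then show ?case by (simp add: hull_inc)
next
  case (Suc n)
  then obtain y0 z t where p: "y0 \<in> Qs H A n" "z \<in> A" "0 \<le> t" "t \<le> 1" "proj_sub H y0 = proj_sub H z"
    "y = (1 - t) *\<^sub>R y0 + t *\<^sub>R z" by auto
  let ?C = "convex hull (A \<inter> {c. proj_sub H c = proj_sub H y0})"
  have "y0 \<in> ?C" using Suc.IH[OF p(1)] .
  moreover have "z \<in> ?C" using p by (intro hull_inc) auto
  ultimately have "y \<in> ?C" using p convexD[OF convex_convex_hull, of y0 _ z "1-t" t] by auto
  moreover have "proj_sub H y = proj_sub H y0"
    using p proj_linear[OF H] by (simp add: linear_add linear_scale flip: scaleR_add_left)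
  ultimately show ?case by simp
qed

lemma Qs_hull2:
  assumes H: "subspace H"
  shows "finite s \<Longrightarrow> s \<noteq> {} \<Longrightarrow> s \<subseteq> A \<inter> {c. proj_sub H c = x} \<Longrightarrow> card s \<le> n + 1 \<Longrightarrow>
    convex hull s \<subseteq> Qs H A n"
proof (induction s arbitrary: n rule: finite_ne_induct)
  case (singleton a)
  then show ?case using Qs_sup by auto
next
  case (insert a s)
  then obtain n' where n: "n = Suc n'" "card s \<le> n' + 1"
    by (cases n) auto
  have IH: "convex hull s \<subseteq> Qs H A n'" using insert n by auto
  have sx: "convex hull s \<subseteq> {c. proj_sub H c = x}"
    using insert.prems(1) by (intro hull_minimal fib_convex[OF H]) auto
  show ?case
  proof
    fix y assume "y \<in> convex hull (insert a s)"
    then obtain u v b where uv: "0 \<le> u" "0 \<le> v" "u + v = 1" "b \<in> convex hull s" "y = u *\<^sub>R a + v *\<^sub>R b"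
      using convex_hull_insert[OF insert.hyps(2)] by auto
    let ?p = "(b, a, u)"
    have "?p \<in> (Qs H A n' \<times> A \<times> {0..1}) \<inter> {p. proj_sub H (fst p) - proj_sub H (fst (snd p)) = 0}"
      using IH uv sx insert.prems(1) by auto
    moreover have "v = 1 - u" using uv by simp
    then have "y = (1 - u) *\<^sub>R b + u *\<^sub>R a" unfolding uv(5) by (simp add: add.commute)
    ultimately show "y \<in> Qs H A n" unfolding n by (simp only: Qs.simps) force
  qed
qed


lemma sum_list_rep: "sum_list (replicate k (v::'a::real_vector)) = real k *\<^sub>R v"
  by (induction k) (auto simp: algebra_simps)

lemma concat_rep_len: "length (concat (map (\<lambda>v. replicate (f v) v) l)) = sum_list (map f l)"
  by (induction l) auto

lemma concat_rep_sum:
  "sum_list (concat (map (\<lambda>v. replicate (f v) v) l)) = sum_list (map (\<lambda>v. real (f v) *\<^sub>R (v::'a::real_vector)) l)"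
  by (induction l) (auto simp: sum_list_rep)

lemma approx:
  fixes K H :: "'a::euclidean_space set"
  assumes H: "subspace H"
    and R: "\<And>c. c \<in> fiber_sym H K \<Longrightarrow> norm (c - proj_sub H c) \<le> R"
    and l: "l \<in> convex hull (fiber_sym H K \<inter> {c. proj_sub H c = x})"
  shows "\<exists>c \<in> (fiber_sym H ^^ m) (fiber_sym H K). dist l c \<le> real (DIM('a)+1) * R / 2^m"
proof -
  let ?K1 = "fiber_sym H K"
  obtain S u where S: "finite S" "S \<subseteq> ?K1 \<inter> {c. proj_sub H c = x}" "card S \<le> DIM('a) + 1"
    and u: "\<forall>v\<in>S. 0 \<le> u v" "sum u S = 1" "sum (\<lambda>v. u v *\<^sub>R v) S = l"
    using l unfolding convex_hull_caratheodory by blast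
  have "S \<noteq> {}" using u(2) by auto
  then obtain c0 where c0: "c0 \<in> S" by blast
  have x: "x \<in> ?K1" "proj_sub H x = x" "x \<in> H"
    using fs_proj_mem[OF H, of c0 K] c0 S proj_decomp[OF H, of c0] proj_idem[OF H] by auto
  have R0: "0 \<le> R" using R[of c0] c0 S by (meson IntD1 norm_ge_zero order_trans subsetD)
  define N :: nat where "N = 2^m"
  have N: "real N = 2^m" "real N > 0" by (auto simp: N_def)
  define n where "n v = nat \<lfloor>real N * u v\<rfloor>" for v
  have hn: "real (n v) \<le> real N * u v \<and> real N * u v - 1 < real (n v)" if "v \<in> S" for v
  proof -
    have "0 \<le> real N * u v" using u(1) that by simp
    then show ?thesis unfolding n_def by linarith
  qed
  define T where "T = sum n S"
  have "real T = (\<Sum>v\<in>S. real (n v))" by (simp add: T_def)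
  also have "\<dots> \<le> (\<Sum>v\<in>S. real N * u v)" using hn by (intro sum_mono) auto
  also have "\<dots> = real N" using u(2) by (simp add: sum_distrib_left[symmetric])
  finally have TN: "T \<le> N" by simp
  obtain l0 where l0: "set l0 = S" "distinct l0" using finite_distinct_list[OF S(1)] by blast
  define xs where "xs = concat (map (\<lambda>v. replicate (n v) v) l0) @ replicate (N - T) x"
  have lxs: "length xs = 2^m"
    using TN l0 by (simp add: xs_def concat_rep_len sum_list_distinct_conv_sum_set T_def N_def)
  have sxs: "set xs \<subseteq> ?K1 \<inter> {c. proj_sub H c = x}"
    using S(2) x l0 by (auto simp: xs_def)
  have sumxs: "sum_list xs = (\<Sum>v\<in>S. real (n v) *\<^sub>R v) + (real N - real T) *\<^sub>R x"
    using TN l0 by (simp add: xs_def concat_rep_sum sum_list_distinct_conv_sum_set sum_list_rep of_nat_diff)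
  define c where "c = (1/2^m) *\<^sub>R sum_list xs"
  have cin: "c \<in> (fiber_sym H ^^ m) ?K1" using avg_mem[OF H lxs sxs] c_def by simp
  have "l - c = (\<Sum>v\<in>S. u v *\<^sub>R v) - (\<Sum>v\<in>S. u v) *\<^sub>R x
      - ((1/real N) *\<^sub>R (\<Sum>v\<in>S. real (n v) *\<^sub>R v) - (1/real N) *\<^sub>R (real T *\<^sub>R x))"
    using u N by (simp add: c_def sumxs algebra_simps)
  also have "\<dots> = (\<Sum>v\<in>S. (u v - real (n v) / real N) *\<^sub>R (v - x))"
    by (simp add: T_def algebra_simps scaleR_sum_left scaleR_sum_right sum_subtractf sum_distrib_left sum.distrib)
  finally have lc: "l - c = (\<Sum>v\<in>S. (u v - real (n v) / real N) *\<^sub>R (v - x))" .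
  have "dist l c = norm (\<Sum>v\<in>S. (u v - real (n v) / real N) *\<^sub>R (v - x))"
    by (simp add: dist_norm lc)
  also have "\<dots> \<le> (\<Sum>v\<in>S. norm ((u v - real (n v) / real N) *\<^sub>R (v - x)))"
    by (rule norm_sum)
  also have "\<dots> \<le> (\<Sum>v\<in>S. (1 / real N) * R)"
  proof (rule sum_mono)
    fix v assume v: "v \<in> S"
    have a: "\<bar>u v - real (n v) / real N\<bar> \<le> 1 / real N"
    proof -
      have h1: "real (n v) / real N \<le> u v" using hn[OF v] N(2) by (simp add: divide_le_eq mult.commute)
      have "u v < (1 + real (n v)) / real N" using hn[OF v] N(2) by (simp add: less_divide_eq mult.commute)
      then have h2: "u v \<le> 1 / real N + real (n v) / real N" by (simp add: add_divide_distrib)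
      show ?thesis using h1 h2 by (simp add: abs_le_iff)
    qed
    have b: "norm (v - x) \<le> R" using R[of v] v S by auto
    show "norm ((u v - real (n v) / real N) *\<^sub>R (v - x)) \<le> (1 / real N) * R"
      using mult_mono[OF a b] by simp
  qed
  also have "\<dots> = real (card S) * R / 2^m" using N by simp
  also have "\<dots> \<le> real (DIM('a)+1) * R / 2^m"
    using S(3) R0 by (intro divide_right_mono mult_right_mono) auto
  finally show ?thesis using cin by blast
qed


lemma hd_bound:
  assumes A: "A \<noteq> {}" and B: "B \<noteq> {}" and AB: "A \<subseteq> B"
    and d: "\<And>b. b \<in> B \<Longrightarrow> \<exists>a\<in>A. dist b a \<le> \<delta>"
  shows "0 \<le> hausdorff_dist A B \<and> hausdorff_dist A B \<le> \<delta>"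
proof -
  have "(SUP a\<in>A. infdist a B) = (SUP a\<in>A. (0::real))" using AB by (intro SUP_cong) auto
  then have s1: "(SUP a\<in>A. infdist a B) = 0" using A by simp
  have "infdist b A \<le> \<delta>" if "b \<in> B" for b
    using d[OF that] infdist_le order_trans by blast
  then have s2: "(SUP b\<in>B. infdist b A) \<le> \<delta>" using B by (intro cSUP_least) auto
  have "0 \<le> \<delta>" using d B by (meson all_not_in_conv order_trans zero_le_dist)
  then show ?thesis using s1 s2 unfolding hausdorff_dist_def by simp
qed

theorem corollary7:
  fixes K H :: "'a::euclidean_space set"
  assumes "compact K" and "K \<noteq> {}"
    and "subspace H" and "1 \<le> dim H" and "dim H \<le> DIM('a) - 1"
  defines "L \<equiv> (\<Union>x\<in>H. convex hull (fiber_sym H K \<inter> (\<lambda>y. y + x) ` orthogonal_comp H))"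
  shows "compact L \<and> L \<noteq> {} \<and> refl_sub H ` L = L \<and>
         (\<forall>m. compact ((fiber_sym H ^^ m) K) \<and> (fiber_sym H ^^ m) K \<noteq> {}) \<and>
         (\<lambda>m. hausdorff_dist ((fiber_sym H ^^ m) K) L) \<longlonglongrightarrow> 0"
proof -
  note H = assms(3)
  let ?P = "proj_sub H"
  let ?K1 = "fiber_sym H K"
  have K1c: "compact ?K1" and K1ne: "?K1 \<noteq> {}"
    using fs_compact[OF H assms(1)] fs_nonempty[OF H assms(2)] by auto
  have Leq: "L = (\<Union>x\<in>H. convex hull (?K1 \<inter> {c. ?P c = x}))"
  proof -
    have "?K1 \<inter> (\<lambda>y. y + x) ` orthogonal_comp H = ?K1 \<inter> {c. ?P c = x}" if "x \<in> H" for x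
      using mem_fiber[OF H that] by blast
    then show ?thesis unfolding L_def by simp
  qed
  have LQ: "L = Qs H ?K1 DIM('a)"
  proof
    show "L \<subseteq> Qs H ?K1 DIM('a)"
    proof
      fix y assume "y \<in> L"
      then obtain x where "y \<in> convex hull (?K1 \<inter> {c. ?P c = x})" using Leq by blast
      then obtain S where S: "finite S" "S \<subseteq> ?K1 \<inter> {c. ?P c = x}" "card S \<le> DIM('a) + 1" "y \<in> convex hull S"
        unfolding caratheodory[of "?K1 \<inter> {c. ?P c = x}"] by blast
      have "S \<noteq> {}" using S(4) by auto
      then show "y \<in> Qs H ?K1 DIM('a)" using Qs_hull2[OF H S(1) _ S(2) S(3)] S(4) by blast
    qed
  next
    show "Qs H ?K1 DIM('a) \<subseteq> L"
    proof
      fix y assume "y \<in> Qs H ?K1 DIM('a)"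
      then have "y \<in> convex hull (?K1 \<inter> {c. ?P c = ?P y})" by (rule Qs_hull[OF H])
      moreover have "?P y \<in> H" using proj_decomp[OF H] by blast
      ultimately show "y \<in> L" unfolding Leq by blast
    qed
  qed
  have Lc: "compact L" unfolding LQ by (rule Qs_compact[OF H K1c])
  have K1L: "?K1 \<subseteq> L" unfolding LQ by (rule Qs_sup)
  have Lne: "L \<noteq> {}" using K1L K1ne by blast
  have Lrefl: "refl_sub H ` L = L"
    unfolding Leq image_UN using refl_hull[OF H] by simp
  have iter: "\<forall>m. compact ((fiber_sym H ^^ m) K) \<and> (fiber_sym H ^^ m) K \<noteq> {}"
    using iter_compact[OF H assms(1,2)] by blast
  obtain B where B: "\<And>a. a \<in> K \<Longrightarrow> norm a \<le> B"
    using compact_imp_bounded[OF assms(1)] unfolding bounded_iff by blast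
  have R: "norm (c - ?P c) \<le> B" if c: "c \<in> ?K1" for c
  proof -
    obtain a q where aq: "a \<in> K" "q \<in> K" "?P a = ?P q" "c = ?P a + (1/2) *\<^sub>R (a - q)"
      using c fs_mem[OF H] by blast
    have "?P c = ?P a" using fs_proj[OF H aq(3)] aq(4) by simp
    then have "c - ?P c = (1/2) *\<^sub>R (a - q)" using aq(4) by simp
    then have "norm (c - ?P c) = (1/2) * norm (a - q)" by simp
    also have "\<dots> \<le> (1/2) * (norm a + norm q)" using norm_triangle_ineq4[of a q] by simp
    also have "\<dots> \<le> B" using B[OF aq(1)] B[OF aq(2)] by simp
    finally show ?thesis .
  qed
  define C where "C = real (DIM('a)+1) * B"
  have bound: "norm (hausdorff_dist ((fiber_sym H ^^ Suc m) K) L) \<le> C * (1/2)^m" for m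
  proof -
    have eq: "(fiber_sym H ^^ Suc m) K = (fiber_sym H ^^ m) ?K1" by (simp add: funpow_swap1)
    have sub: "(fiber_sym H ^^ m) ?K1 \<subseteq> L"
    proof
      fix c assume "c \<in> (fiber_sym H ^^ m) ?K1"
      then have "c \<in> convex hull (?K1 \<inter> {d. ?P d = ?P c})" by (rule iter_in_hull[OF H])
      moreover have "?P c \<in> H" using proj_decomp[OF H] by blast
      ultimately show "c \<in> L" unfolding Leq by blast
    qed
    have close: "\<exists>a\<in>(fiber_sym H ^^ m) ?K1. dist b a \<le> C * (1/2)^m" if bL: "b \<in> L" for b
    proof -
      obtain x where "b \<in> convex hull (?K1 \<inter> {c. ?P c = x})" using bL Leq by blast
      then have "\<exists>a\<in>(fiber_sym H ^^ m) ?K1. dist b a \<le> real (DIM('a)+1) * B / 2^m"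
        using approx[OF H R, where l=b and x=x and m=m] by blast
      moreover have "real (DIM('a)+1) * B / 2^m = C * (1/2)^m" by (simp add: C_def power_one_over)
      ultimately show ?thesis by simp
    qed
    have ne0: "(fiber_sym H ^^ Suc m) K \<noteq> {}"
      by (rule conjunct2[OF spec[OF iter, of "Suc m"]])
    have ne: "(fiber_sym H ^^ m) ?K1 \<noteq> {}" using ne0 unfolding eq .
    have hb: "0 \<le> hausdorff_dist ((fiber_sym H ^^ m) ?K1) L \<and> hausdorff_dist ((fiber_sym H ^^ m) ?K1) L \<le> C * (1/2)^m"
      by (rule hd_bound[OF ne Lne sub close])
    show ?thesis unfolding eq real_norm_def using hb by linarith
  qed
  have t: "(\<lambda>m. C * (1/2::real)^m) \<longlonglongrightarrow> 0"
    by (rule tendsto_mult_right_zero[OF LIMSEQ_power_zero]) simp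
  have "(\<lambda>m. hausdorff_dist ((fiber_sym H ^^ Suc m) K) L) \<longlonglongrightarrow> 0"
    by (rule Lim_null_comparison[OF always_eventually[OF allI[OF bound]] t])
  then have conv: "(\<lambda>m. hausdorff_dist ((fiber_sym H ^^ m) K) L) \<longlonglongrightarrow> 0"
    by (rule LIMSEQ_imp_Suc)
  show ?thesis using Lc Lne Lrefl iter conv by (intro conjI)
qed

end
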